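(* Let $A$ be an $n\times n$ complex matrix and let $P(w)=\prod_{\ell=1}^{p}(w-w_{\ell})$ be a polynomial with complex roots listed in a chosen order such that $P(A)=0$. For $k=0,\dots,p$ set $E_{k}=\prod_{\ell=1}^{k}(A-w_{\ell})\,\mathbb{C}^n$ and $N_{k}=\dim E_{k}$ (so $N_0=n$ and $N_p=0$), and for $1\le \ell\le p-1$ set $\lambda_{\ell}=w_{\ell+1}-w_{\ell}$. Fix $j$ with $1\le j\le p-1$ and $\lambda_j\neq 0$ (i.e. $w_j\neq w_{j+1}$), and let $(N'_k)$, $(\lambda'_\ell)$ denote the same quantities computed from the reordered factorization in which the $j$-th and $(j+1)$-th linear factors $(w-w_j)$ and $(w-w_{j+1})$ are interchanged. Then $$N'_k=N_k\ (k\neq j),\qquad N'_j=N_{j-1}+N_{j+1}-N_j,$$ that is, the dimension vector changes by the simple Weyl reflection at the node $j$ of the linear ($A$-type) chain with nodes $0,1,\dots,p-1$ (node $0$ carrying $N_0=n$), and the couplings change by the corresponding reflection $$\lambda'_{j-1}=\lambda_{j-1}+\lambda_j,\qquad \lambda'_j=-\lambda_j,\qquad \lambda'_{j+1}=\lambda_{j+1}+\lambda_j,\qquad \lambda'_\ell=\lambda_\ell\ (\ell\neq j-1,j,j+1),$$ where for $j=1$ the coupling $\lambda_0$ attached to node $0$ is any quantity of the form $c+w_1$ (with $c$ independent of the ordering) and $\lambda'_0=c+w'_1=c+w_2=\lambda_0+\lambda_1$, and where couplings with indices outside $0,\dots,p-1$ are ignored.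
   Context: In the paper, for a Fuchsian system with residue matrix $A_i$ at a marked point $z_i$, the data $(N_{i,k})$ are the dimensions of the filtration of the fiber, attached to the nodes $\bullet_{i,k}$ of the $i$-th branch of a star-shaped quiver whose central node $\star$ carries $n$; the Fayet–Iliopoulos coupling at $\bullet_{i,\ell}$ ($\ell\ge1$) is $\lambda_{i,\ell}=w_{i,\ell+1}-w_{i,\ell}$ and at the central node it is $\lambda_\star=\sum_i w_{i,1}$. The (Seiberg duality $=$) Weyl reflection at a simple root $\alpha_\sigma$ with $\lambda_\sigma\neq0$ acts by $\boldsymbol{N}\mapsto \boldsymbol{N}-\langle\boldsymbol{N},\alpha_\sigma\rangle\alpha_\sigma$ and $\lambda_\tau\mapsto\lambda_\tau-\langle\alpha_\tau,\alpha_\sigma\rangle\lambda_\sigma$, where $\langle-,-\rangle$ is the symmetric bilinear form given by the Cartan matrix of the (star-shaped) graph ($2$ on the diagonal, $-1$ for adjacent nodes, $0$ otherwise). The paper's statement is phrased as: the reflection at node $\bullet_{i,\ell}$ (with $\lambda_{i,\ell}\neq 0$) has the effect of interchanging the order of the two factors $(w-w_{i,\ell})$ and $(w-w_{i,\ell+1})$ of $P_i(w)$; the claim above is this statement written out on dimension vectors and couplings. *)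

theory Defs
  imports "HOL-Analysis.Analysis"
begin

text \<open>Ordered product (A - w 1)(A - w 2)...(A - w k) of linear factors evaluated at A.\<close>
fun facprod :: "(nat \<Rightarrow> complex) \<Rightarrow> complex^'n^'n \<Rightarrow> nat \<Rightarrow> complex^'n^'n" where
  "facprod w A 0 = mat 1"
| "facprod w A (Suc k) = facprod w A k ** (A - mat (w (Suc k)))"

text \<open>N_k = complex dimension of E_k = image of the k-th partial product acting on C^n.\<close>
definition Ndim :: "(nat \<Rightarrow> complex) \<Rightarrow> complex^'n^'n \<Rightarrow> nat \<Rightarrow> nat" where
  "Ndim w A k = vec.dim (range (\<lambda>x. facprod w A k *v x))"

text \<open>Couplings: node 0 carries c + w 1, node l >= 1 carries w (l+1) - w l.\<close>
definition coupling :: "complex \<Rightarrow> (nat \<Rightarrow> complex) \<Rightarrow> nat \<Rightarrow> complex" where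
  "coupling c w l = (if l = 0 then c + w 1 else w (Suc l) - w l)"

text \<open>Ordering with the j-th and (j+1)-th roots interchanged.\<close>
definition swap_roots :: "(nat \<Rightarrow> complex) \<Rightarrow> nat \<Rightarrow> nat \<Rightarrow> complex" where
  "swap_roots w j = w(j := w (Suc j), Suc j := w j)"

end

theory Submission
  imports Defs
begin

lemma mat_mv: "mat c *v x = c *s (x::complex^'n)"
  by (simp add: vec_eq_iff matrix_vector_mult_def mat_def if_distrib if_distribR sum.delta cong: if_cong)

lemma sub_mv: "(A - mat c) *v x = A *v x - c *s (x::complex^'n)"
  by (simp add: matrix_vector_mult_diff_rdistrib mat_mv)

lemma fac_Suc_mv: "facprod w A (Suc k) *v x = facprod w A k *v (A *v x - w (Suc k) *s x)"
  by (simp add: matrix_vector_mul_assoc[symmetric] sub_mv)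

lemma fac_comm: "facprod w A k *v (A *v x) = A *v (facprod w A k *v x)"
proof (induction k arbitrary: x)
  case 0 then show ?case by simp
next
  case (Suc k)
  show ?case
    by (simp only: fac_Suc_mv matrix_vector_mult_diff_distrib vector_scalar_commute Suc)
qed

lemma fac_comm_sub: "facprod w A k *v ((A - mat c) *v x) = (A - mat c) *v (facprod w A k *v x)"
  by (simp add: sub_mv matrix_vector_mult_diff_distrib vector_scalar_commute fac_comm)

lemma sub_comm: "(A - mat a) *v ((A - mat b) *v x) = (A - mat b) *v ((A - mat a) *v (x::complex^'n))"
  unfolding sub_mv by (simp add: matrix_vector_mult_diff_distrib vector_scalar_commute vec_eq_iff algebra_simps)

lemma key:
  fixes A :: "complex^'n^'n" and V :: "(complex^'n) set"
  assumes V: "vec.subspace V" and inv: "\<And>v. v \<in> V \<Longrightarrow> A *v v \<in> V" and ab: "a \<noteq> b"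
  shows "vec.dim ((*v) (A - mat a) ` V) + vec.dim ((*v) (A - mat b) ` V)
       = vec.dim V + vec.dim ((*v) (A - mat a) ` (*v) (A - mat b) ` V)"
proof -
  let ?M = "A - mat a" and ?N = "A - mat b"
  let ?S = "(*v) ?M ` V" and ?T = "(*v) ?N ` V"
  have SS: "vec.subspace ?S" "vec.subspace ?T" using V vec.subspace_image by blast+
  have MV: "?M *v v \<in> V" "?N *v v \<in> V" if "v \<in> V" for v
    using that inv V by (auto simp: sub_mv intro!: vec.subspace_diff vec.subspace_scale)
  define d where "d = inverse (b - a)"
  have dd: "d * (b - a) = 1" using ab by (simp add: d_def)
  have decomp: "v = ?M *v (d *s v) - ?N *v (d *s v)" for v
  proof -
    have "?M *v (d *s v) - ?N *v (d *s v) = (d * (b - a)) *s v"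
      unfolding sub_mv by (simp add: vector_scalar_commute vec_eq_iff algebra_simps)
    then show ?thesis using dd by simp
  qed
  have sum: "{x + y |x y. x \<in> ?S \<and> y \<in> ?T} = V"
  proof
    show "{x + y |x y. x \<in> ?S \<and> y \<in> ?T} \<subseteq> V"
      using MV V by (auto intro!: vec.subspace_add)
  next
    show "V \<subseteq> {x + y |x y. x \<in> ?S \<and> y \<in> ?T}"
    proof
      fix v assume v: "v \<in> V"
      have dv: "d *s v \<in> V" "- (d *s v) \<in> V" using v V by (auto intro: vec.subspace_scale vec.subspace_neg)
      have "v = ?M *v (d *s v) + ?N *v (- (d *s v))"
      proof -
        have neg: "?N *v (- y) = - (?N *v y)" for y
          by (metis diff_0 matrix_vector_mult_diff_distrib matrix_vector_mult_0_right)
        show ?thesis using decomp[of v] neg[of "d *s v"] by (metis diff_conv_add_uminus)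
      qed
      then show "v \<in> {x + y |x y. x \<in> ?S \<and> y \<in> ?T}" using dv by blast
    qed
  qed
  have int: "?S \<inter> ?T = (*v) ?M ` (*v) ?N ` V"
  proof
    show "(*v) ?M ` (*v) ?N ` V \<subseteq> ?S \<inter> ?T"
    proof
      fix u assume "u \<in> (*v) ?M ` (*v) ?N ` V"
      then obtain v where v: "v \<in> V" "u = ?M *v (?N *v v)" by blast
      have "u = ?N *v (?M *v v)" using v sub_comm[of A a b v] by simp
      then show "u \<in> ?S \<inter> ?T" using v MV by blast
    qed
  next
    show "?S \<inter> ?T \<subseteq> (*v) ?M ` (*v) ?N ` V"
    proof
      fix u assume "u \<in> ?S \<inter> ?T"
      then obtain v1 v2 where v: "v1 \<in> V" "v2 \<in> V" "u = ?M *v v1" "u = ?N *v v2" by blast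
      have "u = ?M *v (d *s u) - ?N *v (d *s u)" by (rule decomp)
      also have "\<dots> = ?M *v (?N *v (d *s v2)) - ?N *v (?M *v (d *s v1))"
        using v by (simp add: vector_scalar_commute)
      also have "\<dots> = ?M *v (?N *v (d *s v2 - d *s v1))"
        by (simp add: sub_comm[of A b a] matrix_vector_mult_diff_distrib)
      finally have "u = ?M *v (?N *v (d *s v2 - d *s v1))" .
      moreover have "d *s v2 - d *s v1 \<in> V" using v V
        by (auto intro!: vec.subspace_diff vec.subspace_scale)
      ultimately show "u \<in> (*v) ?M ` (*v) ?N ` V" by blast
    qed
  qed
  show ?thesis using vec.dim_sums_Int[OF SS] sum int by simp
qed
theorem mainTheorem1:
  fixes A :: "complex^'n^'n" and w :: "nat \<Rightarrow> complex" and p j :: nat and c :: complex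
  assumes PA: "facprod w A p = 0"
    and j: "1 \<le> j" "j \<le> p - 1"
    and lam: "coupling c w j \<noteq> 0"
  shows "(\<forall>k \<le> p. k \<noteq> j \<longrightarrow> Ndim (swap_roots w j) A k = Ndim w A k)
    \<and> int (Ndim (swap_roots w j) A j)
        = int (Ndim w A (j - 1)) + int (Ndim w A (Suc j)) - int (Ndim w A j)
    \<and> coupling c (swap_roots w j) (j - 1) = coupling c w (j - 1) + coupling c w j
    \<and> coupling c (swap_roots w j) j = - coupling c w j
    \<and> (Suc j \<le> p - 1 \<longrightarrow>
         coupling c (swap_roots w j) (Suc j) = coupling c w (Suc j) + coupling c w j)
    \<and> (\<forall>l \<le> p - 1. l \<noteq> j - 1 \<and> l \<noteq> j \<and> l \<noteq> Suc j \<longrightarrow>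
         coupling c (swap_roots w j) l = coupling c w l)"
  proof -
  obtain i where ji: "j = Suc i" using j(1) by (cases j) auto
  have pj: "Suc j \<le> p" using j by simp
  define w' where "w' = swap_roots w j"
  have w'1: "w' j = w (Suc j)" "w' (Suc j) = w j"
    and w'2: "\<And>k. k \<noteq> j \<Longrightarrow> k \<noteq> Suc j \<Longrightarrow> w' k = w k"
    by (auto simp: w'_def swap_roots_def)
  have low: "k \<le> i \<Longrightarrow> facprod w' A k = facprod w A k" for k
    by (induction k) (auto simp: w'2 ji)
  have commM: "(A - mat b) ** (A - mat a) = (A - mat a) ** (A - mat b)" for a b
    by (simp add: matrix_eq matrix_vector_mul_assoc[symmetric] sub_comm)
  have base0: "facprod w' A (Suc j) = facprod w A (Suc j)"
    using low[of i] by (simp add: ji w'1[unfolded ji]) (metis matrix_mul_assoc commM)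
  have high: "Suc j \<le> k \<Longrightarrow> facprod w' A k = facprod w A k" for k
  proof (induction k rule: dec_induct)
    case base then show ?case by (rule base0)
  next
    case (step k) then show ?case by (simp add: w'2)
  qed
  define V where "V = range (\<lambda>x. facprod w A i *v x)"
  have Vs: "vec.subspace V" unfolding V_def
    using vec.subspace_image[OF vec.subspace_UNIV, of "facprod w A i"] by (simp add: image_def)
  have Vinv: "A *v v \<in> V" if "v \<in> V" for v
    using that unfolding V_def by (auto simp: fac_comm[symmetric])
  let ?M = "A - mat (w j)" and ?N = "A - mat (w (Suc j))"
  have r1: "range (\<lambda>x. facprod w A j *v x) = (*v) ?M ` V"
    unfolding V_def image_image ji
    by (simp add: matrix_vector_mul_assoc[symmetric] fac_comm_sub)
  have r2: "range (\<lambda>x. facprod w' A j *v x) = (*v) ?N ` V"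
    unfolding V_def image_image ji using low[of i]
    by (simp add: matrix_vector_mul_assoc[symmetric] fac_comm_sub w'1[unfolded ji])
  have r3: "range (\<lambda>x. facprod w A (Suc j) *v x) = (*v) ?M ` (*v) ?N ` V"
    unfolding V_def image_image ji
    by (simp add: matrix_vector_mul_assoc[symmetric] fac_comm_sub)
  have ab: "w j \<noteq> w (Suc j)" using lam j(1) by (auto simp: coupling_def)
  have K: "Ndim w A j + Ndim w' A j = Ndim w A i + Ndim w A (Suc j)"
    using key[OF Vs Vinv ab] unfolding Ndim_def r1 r2 r3 V_def by simp
  have P1: "\<forall>k \<le> p. k \<noteq> j \<longrightarrow> Ndim w' A k = Ndim w A k"
  proof (intro allI impI)
    fix k assume "k \<le> p" "k \<noteq> j"
    then have "k \<le> i \<or> Suc j \<le> k" using ji by auto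
    then show "Ndim w' A k = Ndim w A k" unfolding Ndim_def using low high by auto
  qed
  have P2: "int (Ndim w' A j) = int (Ndim w A (j - 1)) + int (Ndim w A (Suc j)) - int (Ndim w A j)"
    using K ji by simp
  have P3: "coupling c w' (j - 1) = coupling c w (j - 1) + coupling c w j
    \<and> coupling c w' j = - coupling c w j
    \<and> (Suc j \<le> p - 1 \<longrightarrow> coupling c w' (Suc j) = coupling c w (Suc j) + coupling c w j)
    \<and> (\<forall>l \<le> p - 1. l \<noteq> j - 1 \<and> l \<noteq> j \<and> l \<noteq> Suc j \<longrightarrow> coupling c w' l = coupling c w l)"
    unfolding w'_def swap_roots_def coupling_def using ji by auto
  show ?thesis using P1 P2 P3 unfolding w'_def by blast
qed

end
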